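(* Let $g$ be a Riemannian metric on $\mathbb{R}^D$ written as $g_x(u,u)=u^{\top}H(x)u$, such that there exists $c_2>0$ with $g_x(u,u)\le c_2\|u\|_2^2$ for all $x,u$, and $\|H(x)-H(y)\|_{\mathcal{B}}\le L_H\|x-y\|_2$ for all $x,y$. Let $K_1,K_2>0$ and $\gamma\in\mathcal{C}_{K_1,K_2}$. Then for every $N\ge1$, $$\left|\mathcal{E}^g(\gamma)-\mathcal{E}^g_{\mathrm{tra},N}(\gamma)\right|\le\frac{L_H(K_1^3+K_1^2K_2)}{N}+\frac{4c_2K_1K_2}{N}+\frac{4c_2K_2^2}{N^2}.$$
   Context: $\|\cdot\|_2$ is the Euclidean norm, $\|\cdot\|_{\mathcal{B}}$ the operator norm, $\|f\|_{L^2([0,1])}^2=\int_0^1\|f\|_2^2dt$. $\mathcal{C}_{K_1,K_2}$ is the set of continuous piecewise $C^1$ curves $\gamma:[0,1]\to\mathbb{R}^D$ with $\|\dot\gamma\|_{L^2([0,1])}\le K_1$ and $\|\ddot\gamma\|_{L^2([0,1])}\le K_2$. $\mathcal{E}^g(\gamma)=\int_0^1 g_{\gamma(t)}(\dot\gamma,\dot\gamma)dt$. With $t_n=n/N$, $h=1/N$, $\beta(t_n)=(\gamma(t_{n+1})-\gamma(t_n))/h$, the trapezoidal energy of $\gamma$ is $\mathcal{E}^g_{\mathrm{tra},N}(\gamma)=\frac1N\sum_{n=0}^{N-1}g_{(\gamma(t_n)+\gamma(t_{n+1}))/2}(\beta(t_n),\beta(t_n))$. *)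

theory Defs
  imports "HOL-Analysis.Analysis"
begin

definition metric_g :: "(real^'n \<Rightarrow> real^'n^'n) \<Rightarrow> real^'n \<Rightarrow> real^'n \<Rightarrow> real^'n \<Rightarrow> real" where
  "metric_g H x u v = u \<bullet> (H x *v v)"

definition riemannian_metric :: "(real^'n \<Rightarrow> real^'n^'n) \<Rightarrow> bool" where
  "riemannian_metric H \<longleftrightarrow>
     (\<forall>x. transpose (H x) = H x) \<and> (\<forall>x u. u \<noteq> 0 \<longrightarrow> metric_g H x u u > 0)"

definition op_norm :: "real^'n^'m \<Rightarrow> real" where
  "op_norm A = onorm (\<lambda>v. A *v v)"

definition curve_class :: "real \<Rightarrow> real \<Rightarrow> (real \<Rightarrow> real^'n) \<Rightarrow> bool" where
  "curve_class K1 K2 \<gamma> \<longleftrightarrow>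
     (\<exists>\<gamma>' \<gamma>'' S. finite S \<and>
        (\<forall>t\<in>{0..1}. (\<gamma> has_vector_derivative \<gamma>' t) (at t within {0..1})) \<and>
        continuous_on {0..1} \<gamma>' \<and>
        (\<forall>t\<in>{0..1} - S. (\<gamma>' has_vector_derivative \<gamma>'' t) (at t within {0..1})) \<and>
        (\<lambda>t. norm (\<gamma>' t)^2) integrable_on {0..1} \<and>
        (\<lambda>t. norm (\<gamma>'' t)^2) integrable_on {0..1} \<and>
        sqrt (integral {0..1} (\<lambda>t. norm (\<gamma>' t)^2)) \<le> K1 \<and>
        sqrt (integral {0..1} (\<lambda>t. norm (\<gamma>'' t)^2)) \<le> K2)"

definition energy :: "(real^'n \<Rightarrow> real^'n^'n) \<Rightarrow> (real \<Rightarrow> real^'n) \<Rightarrow> real" where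
  "energy H \<gamma> = integral {0..1}
     (\<lambda>t. let v = vector_derivative \<gamma> (at t within {0..1}) in metric_g H (\<gamma> t) v v)"

definition energy_tra :: "(real^'n \<Rightarrow> real^'n^'n) \<Rightarrow> nat \<Rightarrow> (real \<Rightarrow> real^'n) \<Rightarrow> real" where
  "energy_tra H N \<gamma> = (1 / real N) * (\<Sum>n<N.
     let a = \<gamma> (real n / real N); b = \<gamma> (real (Suc n) / real N);
         \<beta> = (1 / (1 / real N)) *\<^sub>R (b - a)
     in metric_g H ((1/2) *\<^sub>R (a + b)) \<beta> \<beta>)"

end

theory Submission
  imports Defs
begin

lemma metric_diff_bound:
  fixes H :: "real^'n \<Rightarrow> real^'n^'n"
  shows "\<bar>metric_g H x u u - metric_g H y u u\<bar> \<le> op_norm (H x - H y) * (norm u)^2"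
proof -
  have "metric_g H x u u - metric_g H y u u = u \<bullet> ((H x - H y) *v u)"
    by (simp add: metric_g_def matrix_vector_mult_diff_rdistrib inner_diff_right)
  also have "\<bar>\<dots>\<bar> \<le> norm u * norm ((H x - H y) *v u)" by (rule Cauchy_Schwarz_ineq2)
  also have "\<dots> \<le> norm u * (op_norm (H x - H y) * norm u)"
    unfolding op_norm_def by (intro mult_left_mono onorm) auto
  finally show ?thesis by (simp add: power2_eq_square algebra_simps)
qed

lemma op_norm_nonneg: "0 \<le> op_norm (A::real^'n^'m)"
  unfolding op_norm_def by (intro onorm_pos_le) auto

lemma cs_ineq:
  fixes f :: "real \<Rightarrow> 'a::euclidean_space"
  assumes f: "f integrable_on {a..b}" and f2: "(\<lambda>x. norm (f x)^2) integrable_on {a..b}" and ab: "a \<le> b"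
  shows "norm (integral {a..b} f)^2 \<le> (b-a) * integral {a..b} (\<lambda>x. norm (f x)^2)"
proof (cases "a = b")
  case True thus ?thesis by simp
next
  case False
  define c where "c = integral {a..b} f"
  define l where "l = b - a"
  have l: "l > 0" using False ab by (simp add: l_def)
  have i1: "((\<lambda>x. 2 * l * (f x \<bullet> c)) has_integral 2 * l * (c \<bullet> c)) {a..b}"
    using has_integral_mult_right[OF has_integral_linear[OF integrable_integral[OF f] bounded_linear_inner_left[of c]], of "2*l"]
    by (simp add: o_def c_def)
  have i2: "((\<lambda>x. l^2 * norm (f x)^2 + norm c ^2) has_integral
      l^2 * integral {a..b} (\<lambda>x. norm (f x)^2) + l * norm c^2) {a..b}"
    using has_integral_add[OF has_integral_mult_right[OF integrable_integral[OF f2], of "l^2"]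
        has_integral_const_real[of "norm c^2" a b]] ab by (simp add: l_def)
  have pw: "2 * l * (f x \<bullet> c) \<le> l^2 * norm (f x)^2 + norm c ^2" for x
  proof -
    have "0 \<le> norm (l *\<^sub>R f x - c)^2" by simp
    also have "\<dots> = l^2 * norm (f x)^2 - 2 * l * (f x \<bullet> c) + norm c ^2"
      by (simp only: power2_norm_eq_inner) (simp add: inner_diff_left inner_diff_right inner_commute power2_eq_square algebra_simps)
    finally show ?thesis by simp
  qed
  define Q where "Q = integral {a..b} (\<lambda>x. norm (f x)^2)"
  have cc: "c \<bullet> c = norm c^2" by (simp add: power2_norm_eq_inner)
  have "2 * l * (c \<bullet> c) \<le> l^2 * Q + l * norm c^2"
    unfolding Q_def by (rule has_integral_le[OF i1 i2 pw])
  hence "l * norm c^2 \<le> l * (l * Q)" unfolding cc by (simp add: power2_eq_square algebra_simps)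
  hence "norm c^2 \<le> l * Q" using l by simp
  thus ?thesis by (simp add: c_def l_def Q_def)
qed


lemma mv_continuous_on:
  fixes A :: "real \<Rightarrow> real^'n^'m" and v :: "real \<Rightarrow> real^'n"
  assumes "continuous_on S A" "continuous_on S v"
  shows "continuous_on S (\<lambda>t. A t *v v t)"
  unfolding matrix_vector_mult_def using assms
  by (intro continuous_on_vec_lambda continuous_intros)

lemma H_continuous:
  fixes H :: "real^'n \<Rightarrow> real^'n^'n"
  assumes L: "\<forall>x y. op_norm (H x - H y) \<le> L_H * norm (x - y)" and LH: "0 \<le> L_H"
  shows "continuous_on UNIV H"
proof -
  have c: "continuous_on UNIV (\<lambda>x. H x *v w)" for w :: "real^'n"
  proof (rule lipschitz_on_continuous_on, rule lipschitz_onI)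
    fix x y :: "real^'n"
    have "dist (H x *v w) (H y *v w) = norm ((H x - H y) *v w)"
      by (simp add: dist_norm matrix_vector_mult_diff_rdistrib)
    also have "\<dots> \<le> op_norm (H x - H y) * norm w"
      unfolding op_norm_def by (intro onorm) auto
    also have "\<dots> \<le> L_H * norm (x - y) * norm w"
      using L by (intro mult_right_mono) auto
    finally show "dist (H x *v w) (H y *v w) \<le> (L_H * norm w) * dist x y"
      by (simp add: dist_norm algebra_simps)
  qed (use LH in auto)
  have eq: "H = (\<lambda>x. \<chi> i j. (H x *v axis j 1) $ i)"
    by (simp add: matrix_vector_mult_basis column_def)
  show ?thesis
    by (subst eq) (intro continuous_on_vec_lambda continuous_on_component c)
qed

lemma hic: "(a::real) \<le> b \<Longrightarrow> ((\<lambda>x::real. c) has_integral (b - a) *\<^sub>R c) {a..b}"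
  using has_integral_const_real[of c a b] by simp

locale crv =
  fixes g :: "real \<Rightarrow> real^'n" and g' g'' :: "real \<Rightarrow> real^'n" and S :: "real set"
  assumes fin: "finite S"
    and d1: "\<forall>t\<in>{0..1}. (g has_vector_derivative g' t) (at t within {0..1})"
    and c1: "continuous_on {0..1} g'"
    and d2: "\<forall>t\<in>{0..1} - S. (g' has_vector_derivative g'' t) (at t within {0..1})"
    and i1: "(\<lambda>t. norm (g' t)^2) integrable_on {0..1}"
    and i2: "(\<lambda>t. norm (g'' t)^2) integrable_on {0..1}"
begin

lemma ftc1: assumes "0 \<le> a" "a \<le> b" "b \<le> 1" shows "(g' has_integral g b - g a) {a..b}"
proof (rule fundamental_theorem_of_calculus[OF \<open>a \<le> b\<close>])
  fix x assume x: "x \<in> {a..b}"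
  hence "(g has_vector_derivative g' x) (at x within {0..1})" using d1 assms by auto
  thus "(g has_vector_derivative g' x) (at x within {a..b})"
    by (rule has_vector_derivative_within_subset) (use assms in auto)
qed

lemma ftc2: assumes "0 \<le> a" "a \<le> b" "b \<le> 1" shows "(g'' has_integral g' b - g' a) {a..b}"
proof (rule fundamental_theorem_of_calculus_interior_strong[OF fin \<open>a \<le> b\<close>])
  fix x assume x: "x \<in> {a<..<b} - S"
  hence "(g' has_vector_derivative g'' x) (at x within {0..1})" using d2 assms by auto
  moreover have "at x within {0..1} = at x" using x assms by (intro at_within_Icc_at) auto
  ultimately show "(g' has_vector_derivative g'' x) (at x)" by simp
next
  show "continuous_on {a..b} g'" by (rule continuous_on_subset[OF c1]) (use assms in auto)
qed

lemma g_cont: "continuous_on {0..1} g"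
  using d1 by (metis continuous_on_eq_continuous_within has_vector_derivative_continuous)

lemma i2_sub: assumes "0 \<le> a" "b \<le> 1" shows "(\<lambda>t. norm (g'' t)^2) integrable_on {a..b}"
  using assms by (intro integrable_on_subinterval[OF i2]) auto

lemma i1_sub: assumes "0 \<le> a" "b \<le> 1" shows "(\<lambda>t. norm (g' t)^2) integrable_on {a..b}"
  using assms by (intro integrable_on_subinterval[OF i1]) auto

lemma diff_bound0:
  assumes "0 \<le> s" "s \<le> t" "t \<le> 1"
  shows "norm (g' t - g' s)^2 \<le> (t - s) * integral {s..t} (\<lambda>x. norm (g'' x)^2)"
proof -
  have "g' t - g' s = integral {s..t} g''" using ftc2[OF assms] by (simp add: integral_unique)
  moreover have "norm (integral {s..t} g'')^2 \<le> (t - s) * integral {s..t} (\<lambda>x. norm (g'' x)^2)"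
    using ftc2[OF assms] assms by (intro cs_ineq i2_sub) auto
  ultimately show ?thesis by simp
qed

lemma diff_bound:
  assumes "0 \<le> a" "a \<le> b" "b \<le> 1" "s \<in> {a..b}" "t \<in> {a..b}"
  shows "norm (g' t - g' s)^2 \<le> (b - a) * integral {a..b} (\<lambda>x. norm (g'' x)^2)"
proof -
  have *: "norm (g' y - g' x)^2 \<le> (b - a) * integral {a..b} (\<lambda>x. norm (g'' x)^2)"
    if "x \<le> y" "x \<in> {a..b}" "y \<in> {a..b}" for x y
  proof -
    have "norm (g' y - g' x)^2 \<le> (y - x) * integral {x..y} (\<lambda>x. norm (g'' x)^2)"
      using that assms by (intro diff_bound0) auto
    also have "\<dots> \<le> (b - a) * integral {a..b} (\<lambda>x. norm (g'' x)^2)"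
    proof (rule mult_mono)
      show "integral {x..y} (\<lambda>x. norm (g'' x)^2) \<le> integral {a..b} (\<lambda>x. norm (g'' x)^2)"
        using that assms by (intro integral_subset_le i2_sub) auto
      show "0 \<le> integral {x..y} (\<lambda>x. norm (g'' x)^2)"
        using that assms by (intro integral_nonneg i2_sub) auto
    qed (use that in auto)
    finally show ?thesis .
  qed
  show ?thesis
  proof (cases "s \<le> t")
    case True thus ?thesis using * assms by auto
  next
    case False thus ?thesis using *[of t s] assms by (simp add: norm_minus_commute)
  qed
qed


lemma sup_bound:
  assumes t: "t \<in> {0..1}"
  shows "norm (g' t) \<le> sqrt (integral {0..1} (\<lambda>t. norm (g' t)^2)) + sqrt (integral {0..1} (\<lambda>t. norm (g'' t)^2))"
proof -
  have "continuous_on {0..1} (\<lambda>t. norm (g' t)^2)" using c1 by (intro continuous_intros)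
  then obtain s0 where s0: "s0 \<in> {0..1}" "\<forall>y\<in>{0..1}. norm (g' s0)^2 \<le> norm (g' y)^2"
    using continuous_attains_inf[of "{0..1::real}" "\<lambda>t. norm (g' t)^2"] by auto
  have "integral {0..1} (\<lambda>_::real. norm (g' s0)^2) \<le> integral {0..1} (\<lambda>t. norm (g' t)^2)"
    by (rule Henstock_Kurzweil_Integration.integral_le) (use s0 i1 in auto)
  hence "norm (g' s0) \<le> sqrt (integral {0..1} (\<lambda>t. norm (g' t)^2))"
    by (intro real_le_rsqrt) simp
  moreover have "norm (g' t - g' s0)^2 \<le> (1 - 0) * integral {0..1} (\<lambda>t. norm (g'' t)^2)"
    using s0 t by (intro diff_bound) auto
  hence "norm (g' t - g' s0) \<le> sqrt (integral {0..1} (\<lambda>t. norm (g'' t)^2))"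
    by (intro real_le_rsqrt) simp
  moreover have "norm (g' t) \<le> norm (g' s0) + norm (g' t - g' s0)"
    using norm_triangle_ineq[of "g' s0" "g' t - g' s0"] by simp
  ultimately show ?thesis by linarith
qed

lemma lip:
  assumes M: "\<forall>t\<in>{0..1}. norm (g' t) \<le> M" and st: "0 \<le> s" "s \<le> t" "t \<le> 1"
  shows "norm (g t - g s) \<le> M * (t - s)"
proof -
  have "g t - g s = integral {s..t} g'" using ftc1[OF st] by (simp add: integral_unique)
  also have "norm \<dots> \<le> integral {s..t} (\<lambda>_. M)"
    using ftc1[OF st] M st by (intro integral_norm_bound_integral) auto
  finally show ?thesis using st by (simp add: mult.commute)
qed


lemma interval_bound:
  fixes H :: "real^'n \<Rightarrow> real^'n^'n" and c2 L_H M a b :: real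
  assumes rm: "riemannian_metric H"
    and c2b: "\<forall>x u. metric_g H x u u \<le> c2 * (norm u)^2"
    and Lip: "\<forall>x y. op_norm (H x - H y) \<le> L_H * norm (x - y)"
    and LH: "0 \<le> L_H" and c2: "0 \<le> c2"
    and M: "\<forall>t\<in>{0..1}. norm (g' t) \<le> M"
    and ab: "0 \<le> a" "a < b" "b \<le> 1"
  shows "\<bar>integral {a..b} (\<lambda>t. metric_g H (g t) (g' t) (g' t))
           - (b - a) * metric_g H ((1/2) *\<^sub>R (g a + g b)) ((1/(b-a)) *\<^sub>R (g b - g a)) ((1/(b-a)) *\<^sub>R (g b - g a))\<bar>
         \<le> L_H * (b - a) * M * integral {a..b} (\<lambda>t. norm (g' t)^2)
            + c2 * (b - a)^2 * integral {a..b} (\<lambda>t. norm (g'' t)^2)"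
proof -
  define h where "h = b - a"
  have h: "h > 0" using ab by (simp add: h_def)
  define m where "m = (1/2) *\<^sub>R (g a + g b)"
  define A where "A = H m"
  define \<beta> where "\<beta> = (1/h) *\<^sub>R (g b - g a)"
  define q where "q = (\<lambda>v. metric_g H m v v)"
  define e where "e = (\<lambda>t. metric_g H (g t) (g' t) (g' t))"
  define Q2 where "Q2 = integral {a..b} (\<lambda>t. norm (g'' t)^2)"
  define Q1 where "Q1 = integral {a..b} (\<lambda>t. norm (g' t)^2)"
  have M0: "0 \<le> M" using M[rule_format, of 0] norm_ge_zero[of "g' 0"] by (simp del: norm_ge_zero)
  have sub: "{a..b} \<subseteq> {0..1}" using ab by auto
  have gc: "continuous_on {a..b} g" by (rule continuous_on_subset[OF g_cont sub])
  have gc': "continuous_on {a..b} g'" by (rule continuous_on_subset[OF c1 sub])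
  have Hc: "continuous_on {a..b} (\<lambda>t. H (g t))"
    by (rule continuous_on_compose2[OF H_continuous[OF Lip LH] gc]) auto
  have e_cont: "continuous_on {a..b} e"
    unfolding e_def metric_g_def by (intro continuous_intros mv_continuous_on Hc gc')
  have q_cont: "continuous_on {a..b} (\<lambda>t. q (g' t))"
    unfolding q_def metric_g_def by (intro continuous_intros mv_continuous_on gc')
  have e_int: "e integrable_on {a..b}" by (rule integrable_continuous_interval[OF e_cont])
  have q_int: "(\<lambda>t. q (g' t)) integrable_on {a..b}" by (rule integrable_continuous_interval[OF q_cont])
  have i1ab: "(\<lambda>t. norm (g' t)^2) integrable_on {a..b}" using ab by (intro i1_sub) auto
  have i2ab: "(\<lambda>t. norm (g'' t)^2) integrable_on {a..b}" using ab by (intro i2_sub) auto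
  have P1: "\<bar>integral {a..b} (\<lambda>t. e t - q (g' t))\<bar> \<le> L_H * h * M * Q1"
  proof -
    have "norm (integral {a..b} (\<lambda>t. e t - q (g' t))) \<le> integral {a..b} (\<lambda>t. L_H * h * M * norm (g' t)^2)"
    proof (rule integral_norm_bound_integral)
      show "(\<lambda>t. e t - q (g' t)) integrable_on {a..b}" using e_int q_int by (rule integrable_diff)
      show "(\<lambda>t. L_H * h * M * norm (g' t)^2) integrable_on {a..b}" using i1ab by (rule integrable_on_mult_right)
    next
      fix t assume t: "t \<in> {a..b}"
      have "norm (g t - m) \<le> h * M"
      proof -
        have "g t - m = (1/2) *\<^sub>R ((g t - g a) + (g t - g b))"
        proof -
          have "g t = (1/2) *\<^sub>R g t + (1/2) *\<^sub>R g t" by (simp flip: scaleR_add_left)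
          thus ?thesis unfolding m_def by (metis (no_types, lifting) add_diff_add scaleR_add_right scaleR_diff_right)
        qed
        hence "norm (g t - m) = norm ((1/2) *\<^sub>R ((g t - g a) - (g b - g t)))"
          by (metis diff_minus_eq_add minus_diff_eq)
        also have "\<dots> = (1/2) * norm ((g t - g a) - (g b - g t))" by simp
        also have "\<dots> \<le> (1/2) * (norm (g t - g a) + norm (g b - g t))" by (intro mult_left_mono norm_triangle_ineq4) auto
        also have "\<dots> \<le> (1/2) * (M * (t - a) + M * (b - t))"
          using t ab by (intro mult_left_mono add_mono lip[OF M]) auto
        also have "\<dots> \<le> h * M" using M0 ab mult_left_mono[OF less_imp_le[OF ab(2)] M0] by (simp add: h_def algebra_simps)
        finally show ?thesis .
      qed
      have "norm (e t - q (g' t)) \<le> op_norm (H (g t) - H m) * (norm (g' t))^2"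
        unfolding e_def q_def real_norm_def by (rule metric_diff_bound)
      also have "\<dots> \<le> (L_H * norm (g t - m)) * (norm (g' t))^2"
        using Lip by (intro mult_right_mono) auto
      also have "\<dots> \<le> (L_H * (h * M)) * (norm (g' t))^2"
        using \<open>norm (g t - m) \<le> h * M\<close> LH by (intro mult_right_mono mult_left_mono) auto
      finally show "norm (e t - q (g' t)) \<le> L_H * h * M * (norm (g' t))^2" by (simp add: mult.assoc)
    qed
    thus ?thesis by (simp add: Q1_def)
  qed
  define w where "w = (\<lambda>t. g' t - \<beta>)"
  have hb: "h *\<^sub>R \<beta> = g b - g a" using h by (simp add: \<beta>_def)
  have w_int: "(w has_integral 0) {a..b}"
  proof -
    have "(w has_integral (g b - g a) - (b - a) *\<^sub>R \<beta>) {a..b}"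
      unfolding w_def by (intro has_integral_diff ftc1 hic) (use ab in auto)
    thus ?thesis using ab hb by (simp add: h_def)
  qed
  define L where "L = (\<lambda>v. \<beta> \<bullet> (A *v v) + v \<bullet> (A *v \<beta>))"
  have bl: "bounded_linear L"
    unfolding L_def
    by (intro bounded_linear_add bounded_linear_compose[OF bounded_linear_inner_right matrix_vector_mul_bounded_linear]
        bounded_linear_inner_left)
  have L_int: "((\<lambda>t. L (w t)) has_integral 0) {a..b}"
    using has_integral_linear[OF w_int bl] by (simp add: o_def L_def)
  have qdec: "q (g' t) = q (w t) + L (w t) + q \<beta>" for t
    by (simp add: q_def L_def w_def A_def metric_g_def matrix_vector_right_distrib
        matrix_vector_mult_diff_distrib inner_add_left inner_add_right inner_diff_left inner_diff_right algebra_simps)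
  have qw_int: "((\<lambda>t. q (w t)) has_integral integral {a..b} (\<lambda>t. q (g' t)) - h * q \<beta>) {a..b}"
  proof -
    have "((\<lambda>t. q (g' t) - L (w t) - q \<beta>) has_integral integral {a..b} (\<lambda>t. q (g' t)) - 0 - (b - a) *\<^sub>R q \<beta>) {a..b}"
      by (intro has_integral_diff integrable_integral q_int L_int hic) (use ab in auto)
    thus ?thesis using ab by (simp add: qdec h_def)
  qed
  have wb: "norm (w t)^2 \<le> h * Q2" if t: "t \<in> {a..b}" for t
  proof -
    have I: "((\<lambda>s. g' t - g' s) has_integral h *\<^sub>R w t) {a..b}"
    proof -
      have "((\<lambda>s. g' t - g' s) has_integral (b - a) *\<^sub>R g' t - (g b - g a)) {a..b}"
        by (intro has_integral_diff ftc1 hic) (use ab in auto)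
      moreover have "(b - a) *\<^sub>R g' t - (g b - g a) = h *\<^sub>R w t"
        by (simp add: hb[symmetric] h_def w_def scaleR_diff_right)
      ultimately show ?thesis by simp
    qed
    have c: "continuous_on {a..b} (\<lambda>s. norm (g' t - g' s)^2)" using gc' by (intro continuous_intros)
    have "norm (integral {a..b} (\<lambda>s. g' t - g' s))^2 \<le> (b - a) * integral {a..b} (\<lambda>s. norm (g' t - g' s)^2)"
      using I ab by (intro cs_ineq integrable_continuous_interval[OF c]) auto
    also have "integral {a..b} (\<lambda>s. norm (g' t - g' s)^2) \<le> integral {a..b} (\<lambda>s. h * Q2)"
      by (rule Henstock_Kurzweil_Integration.integral_le)
        (use integrable_continuous_interval[OF c] t ab in \<open>auto simp: h_def Q2_def intro!: diff_bound\<close>)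
    finally have "norm (h *\<^sub>R w t)^2 \<le> h * (h * (h * Q2))"
      using I ab by (simp add: integral_unique h_def mult_left_mono)
    hence "h^2 * norm (w t)^2 \<le> h^2 * (h * Q2)" by (simp add: power2_eq_square algebra_simps abs_of_pos[OF h])
    thus ?thesis using h by simp
  qed
  have Q2_0: "0 \<le> Q2" unfolding Q2_def by (intro integral_nonneg i2ab) auto
  have P2: "0 \<le> integral {a..b} (\<lambda>t. q (g' t)) - h * q \<beta> \<and> integral {a..b} (\<lambda>t. q (g' t)) - h * q \<beta> \<le> c2 * h^2 * Q2"
  proof
    have qpos: "0 \<le> q v" for v
      using rm unfolding riemannian_metric_def q_def by (cases "v = 0") (auto simp: metric_g_def less_imp_le)
    show "0 \<le> integral {a..b} (\<lambda>t. q (g' t)) - h * q \<beta>"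
      using has_integral_nonneg[OF qw_int] qpos by auto
    have "((\<lambda>t. c2 * (h * Q2)) has_integral (b - a) *\<^sub>R (c2 * (h * Q2))) {a..b}"
      by (rule hic) (use ab in auto)
    moreover have "q (w t) \<le> c2 * (h * Q2)" if "t \<in> {a..b}" for t
    proof -
      have "q (w t) \<le> c2 * norm (w t)^2" using c2b by (simp add: q_def)
      also have "\<dots> \<le> c2 * (h * Q2)" using wb[OF that] c2 by (intro mult_left_mono)
      finally show ?thesis .
    qed
    ultimately have "integral {a..b} (\<lambda>t. q (g' t)) - h * q \<beta> \<le> (b - a) *\<^sub>R (c2 * (h * Q2))"
      using has_integral_le[OF qw_int] by blast
    thus "integral {a..b} (\<lambda>t. q (g' t)) - h * q \<beta> \<le> c2 * h^2 * Q2"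
      using ab by (simp add: h_def power2_eq_square algebra_simps)
  qed
  have split: "integral {a..b} e = integral {a..b} (\<lambda>t. e t - q (g' t)) + integral {a..b} (\<lambda>t. q (g' t))"
    using integral_diff[OF e_int q_int] by simp
  have "\<bar>integral {a..b} e - h * q \<beta>\<bar> \<le> L_H * h * M * Q1 + c2 * h^2 * Q2"
    using P1 P2 split by linarith
  thus ?thesis by (simp add: e_def h_def q_def \<beta>_def m_def Q1_def Q2_def)
qed


lemma e_int:
  fixes H :: "real^'n \<Rightarrow> real^'n^'n"
  assumes Lip: "\<forall>x y. op_norm (H x - H y) \<le> L_H * norm (x - y)" and LH: "0 \<le> L_H"
  shows "(\<lambda>t. metric_g H (g t) (g' t) (g' t)) integrable_on {0..1}"
proof -
  have Hc: "continuous_on {0..1} (\<lambda>t. H (g t))"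
    by (rule continuous_on_compose2[OF H_continuous[OF Lip LH] g_cont]) auto
  have "continuous_on {0..1} (\<lambda>t. metric_g H (g t) (g' t) (g' t))"
    unfolding metric_g_def by (intro continuous_intros mv_continuous_on Hc c1)
  thus ?thesis by (rule integrable_continuous_interval)
qed

end

lemma split_sum:
  fixes f :: "real \<Rightarrow> 'a::banach"
  assumes f: "f integrable_on {0..1}" and N: "N \<ge> 1"
  shows "integral {0..1} f = (\<Sum>n<N. integral {real n / real N..real (Suc n) / real N} f)"
proof -
  have "k \<le> N \<Longrightarrow> integral {0..real k / real N} f = (\<Sum>n<k. integral {real n / real N..real (Suc n) / real N} f)" for k
  proof (induction k)
    case 0 thus ?case by simp
  next
    case (Suc k)
    have le: "real (Suc k) / real N \<le> 1" using Suc.prems N by (simp add: field_simps)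
    have "integral {0..real (Suc k) / real N} f = integral {0..real k / real N} f + integral {real k / real N..real (Suc k) / real N} f"
      by (rule Henstock_Kurzweil_Integration.integral_combine[symmetric]) (use le in \<open>auto simp: divide_right_mono intro: integrable_on_subinterval[OF f]\<close>)
    thus ?case using Suc by simp
  qed
  from this[of N] N show ?thesis by simp
qed


theorem proposition7p5:
  fixes H :: "real^'n \<Rightarrow> real^'n^'n" and c2 L_H K1 K2 :: real
    and \<gamma> :: "real \<Rightarrow> real^'n" and N :: nat
  assumes "riemannian_metric H"
    and "c2 > 0"
    and "\<forall>x u. metric_g H x u u \<le> c2 * (norm u)^2"
    and "\<forall>x y. op_norm (H x - H y) \<le> L_H * norm (x - y)"
    and "K1 > 0" and "K2 > 0"
    and "curve_class K1 K2 \<gamma>"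
    and "N \<ge> 1"
  shows "\<bar>energy H \<gamma> - energy_tra H N \<gamma>\<bar>
           \<le> L_H * (K1^3 + K1^2 * K2) / real N + 4 * c2 * K1 * K2 / real N
              + 4 * c2 * K2^2 / (real N)^2"
proof -
  note rm = assms(1) and c2 = assms(2) and c2b = assms(3) and Lip = assms(4)
    and K1 = assms(5) and K2 = assms(6) and N = assms(8)
  obtain g' g'' S where fin: "finite S"
    and d1: "\<forall>t\<in>{0..1}. (\<gamma> has_vector_derivative g' t) (at t within {0..1})"
    and c1: "continuous_on {0..1} g'"
    and d2: "\<forall>t\<in>{0..1} - S. (g' has_vector_derivative g'' t) (at t within {0..1})"
    and i1: "(\<lambda>t. norm (g' t)^2) integrable_on {0..1}"
    and i2: "(\<lambda>t. norm (g'' t)^2) integrable_on {0..1}"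
    and K1b: "sqrt (integral {0..1} (\<lambda>t. norm (g' t)^2)) \<le> K1"
    and K2b: "sqrt (integral {0..1} (\<lambda>t. norm (g'' t)^2)) \<le> K2"
    using assms(7) unfolding curve_class_def by blast
  interpret crv \<gamma> g' g'' S using fin d1 c1 d2 i1 i2 by unfold_locales
  have LH: "0 \<le> L_H"
  proof -
    obtain i :: 'n where True by blast
    have "0 \<le> op_norm (H 0 - H (axis i 1))" by (rule op_norm_nonneg)
    also have "\<dots> \<le> L_H * norm (0 - axis i (1::real))" using Lip by blast
    finally show ?thesis by simp
  qed
  define Q1 where "Q1 = integral {0..1} (\<lambda>t. norm (g' t)^2)"
  define Q2 where "Q2 = integral {0..1} (\<lambda>t. norm (g'' t)^2)"
  have Q1_0: "0 \<le> Q1" unfolding Q1_def by (intro integral_nonneg i1) auto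
  have Q2_0: "0 \<le> Q2" unfolding Q2_def by (intro integral_nonneg i2) auto
  have Q1K: "Q1 \<le> K1^2"
  proof -
    have "sqrt Q1 ^ 2 \<le> K1 ^ 2" using K1b Q1_0 by (intro power_mono) (auto simp: Q1_def)
    thus ?thesis using Q1_0 by simp
  qed
  have Q2K: "Q2 \<le> K2^2"
  proof -
    have "sqrt Q2 ^ 2 \<le> K2 ^ 2" using K2b Q2_0 by (intro power_mono) (auto simp: Q2_def)
    thus ?thesis using Q2_0 by simp
  qed
  define M where "M = sqrt Q1 + sqrt Q2"
  have Mb: "\<forall>t\<in>{0..1}. norm (g' t) \<le> M" using sup_bound by (simp add: M_def Q1_def Q2_def)
  have MK: "M \<le> K1 + K2" using K1b K2b by (simp add: M_def Q1_def Q2_def)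
  define e where "e = (\<lambda>t. metric_g H (\<gamma> t) (g' t) (g' t))"
  define a where "a = (\<lambda>n::nat. real n / real N)"
  define b where "b = (\<lambda>n::nat. real (Suc n) / real N)"
  define T where "T = (\<lambda>n. (b n - a n) * metric_g H ((1/2) *\<^sub>R (\<gamma> (a n) + \<gamma> (b n)))
      ((1/(b n - a n)) *\<^sub>R (\<gamma> (b n) - \<gamma> (a n))) ((1/(b n - a n)) *\<^sub>R (\<gamma> (b n) - \<gamma> (a n))))"
  have ba: "b n - a n = 1 / real N" for n
    by (simp add: a_def b_def diff_divide_distrib[symmetric])
  have E: "energy H \<gamma> = (\<Sum>n<N. integral {a n..b n} e)"
  proof -
    have "energy H \<gamma> = integral {0..1} e"
      unfolding energy_def e_def Let_def
    proof (rule integral_cong)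
      fix t :: real assume t: "t \<in> {0..1}"
      have "vector_derivative \<gamma> (at t within {0..1}) = g' t"
        by (rule vector_derivative_within_closed_interval) (use t d1 in auto)
      thus "metric_g H (\<gamma> t) (vector_derivative \<gamma> (at t within {0..1})) (vector_derivative \<gamma> (at t within {0..1}))
          = metric_g H (\<gamma> t) (g' t) (g' t)" by simp
    qed
    also have "\<dots> = (\<Sum>n<N. integral {a n..b n} e)"
      unfolding a_def b_def e_def by (rule split_sum[OF e_int[OF Lip LH] N])
    finally show ?thesis .
  qed
  have Et: "energy_tra H N \<gamma> = (\<Sum>n<N. T n)"
    unfolding T_def ba unfolding energy_tra_def Let_def sum_distrib_left a_def b_def by simp
  have I1: "Q1 = (\<Sum>n<N. integral {a n..b n} (\<lambda>t. norm (g' t)^2))"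
    unfolding Q1_def a_def b_def by (rule split_sum[OF i1 N])
  have I2: "Q2 = (\<Sum>n<N. integral {a n..b n} (\<lambda>t. norm (g'' t)^2))"
    unfolding Q2_def a_def b_def by (rule split_sum[OF i2 N])
  have Nr: "real N \<ge> 1" using N by simp
  have per: "\<bar>integral {a n..b n} e - T n\<bar> \<le> L_H * (1 / real N) * M * integral {a n..b n} (\<lambda>t. norm (g' t)^2)
       + c2 * (1 / real N)^2 * integral {a n..b n} (\<lambda>t. norm (g'' t)^2)" if n: "n < N" for n
  proof -
    have "0 \<le> a n" "a n < b n" "b n \<le> 1"
      using n Nr by (auto simp: a_def b_def divide_right_mono field_simps)
    from interval_bound[OF rm c2b Lip LH less_imp_le[OF c2] Mb this]
    show ?thesis unfolding e_def T_def ba .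
  qed
  have "\<bar>energy H \<gamma> - energy_tra H N \<gamma>\<bar> = \<bar>\<Sum>n<N. integral {a n..b n} e - T n\<bar>"
    by (simp add: E Et sum_subtractf)
  also have "\<dots> \<le> (\<Sum>n<N. \<bar>integral {a n..b n} e - T n\<bar>)" by (rule sum_abs)
  also have "\<dots> \<le> (\<Sum>n<N. L_H * (1 / real N) * M * integral {a n..b n} (\<lambda>t. norm (g' t)^2)
       + c2 * (1 / real N)^2 * integral {a n..b n} (\<lambda>t. norm (g'' t)^2))"
    by (rule sum_mono) (use per in auto)
  also have "\<dots> = L_H * (1 / real N) * M * Q1 + c2 * (1 / real N)^2 * Q2"
    by (simp add: I1 I2 sum.distrib sum_distrib_left)
  also have "\<dots> \<le> L_H * (K1^3 + K1^2 * K2) / real N + 4 * c2 * K1 * K2 / real N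
              + 4 * c2 * K2^2 / (real N)^2"
  proof -
    have M0: "0 \<le> M" using Q1_0 Q2_0 by (simp add: M_def)
    have "M * Q1 \<le> (K1 + K2) * K1^2" using MK Q1K M0 Q1_0 by (intro mult_mono) auto
    hence "L_H * M * Q1 \<le> L_H * ((K1 + K2) * K1^2)" using LH by (simp add: mult_left_mono mult.assoc)
    also have "L_H * ((K1 + K2) * K1^2) = L_H * (K1^3 + K1^2 * K2)"
      by (simp add: power2_eq_square power3_eq_cube algebra_simps)
    finally have "(L_H * M * Q1) / real N \<le> L_H * (K1^3 + K1^2 * K2) / real N"
      using Nr by (intro divide_right_mono) auto
    hence A: "L_H * (1 / real N) * M * Q1 \<le> L_H * (K1^3 + K1^2 * K2) / real N" by simp
    have "c2 * Q2 \<le> c2 * K2^2" using Q2K c2 by (intro mult_left_mono) auto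
    also have "\<dots> \<le> 4 * c2 * K2^2" using c2 by simp
    finally have "(c2 * Q2) / (real N)^2 \<le> (4 * c2 * K2^2) / (real N)^2"
      by (intro divide_right_mono) auto
    hence B: "c2 * (1 / real N)^2 * Q2 \<le> 4 * c2 * K2^2 / (real N)^2" by (simp add: power_divide)
    have C: "0 \<le> 4 * c2 * K1 * K2 / real N" using c2 K1 K2 by simp
    show ?thesis using A B C by linarith
  qed
  finally show ?thesis .
qed

end
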